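(* For all $n>0$ and all lattice paths $P$ from $(0,0)$ to $(n,n)$ with unit north and east steps, $\mathrm{word}(\phi_{\mathrm{LW}}(P))=\mathrm{sw}^-_{1,-1}(\mathrm{word}(P))$.
   Context: Words over $\{\mathrm{N},\mathrm{E}\}$ are identified with lattice paths from $(0,0)$ (N = unit north step, E = unit east step); $\mathrm{word}(P)$ is the word of a path $P$, and $\mathrm{rev}$ reverses a word. The levels of a word $w=w_1\cdots w_n$ for $\mathrm{sw}^-_{1,-1}$ are $l_0=0$, $l_i=l_{i-1}+1$ if $w_i=\mathrm{N}$, $l_i=l_{i-1}-1$ if $w_i=\mathrm{E}$. $\mathrm{sw}^-_{1,-1}(w)$ is obtained by: for $k=-1,-2,\ldots$ and then $k=\ldots,2,1,0$ (all negative values in decreasing order, then all nonnegative values in decreasing order), scan $w$ from right to left and append each letter $w_i$ ($i\ge1$) with $l_i=k$. For a path $P$ from $(0,0)$ to $(n,n)$, its area vector is $g(P)=(g_0,\ldots,g_{n-1})$ where $g_i+n-i$ is the number of complete unit squares in the strip $\{(x,y):x\ge0,\ i\le y\le i+1\}$ lying to the right of $P$ and to the left of the line $x=n$. For each integer $i$, let $z^{(i)}$ be the subsequence of $g(P)$ consisting of all entries equal to $i$ or $i-1$, and let $\sigma^{(i)}$ be obtained by replacing each $i$ by $\mathrm{E}$ and each $i-1$ by $\mathrm{N}$. For $i\ge0$ let $\tau^{(i)}=\mathrm{rev}(\sigma^{(i)})$. For $i<0$, $\sigma^{(i)}$ (when nonempty) ends in $\mathrm{E}$; writing $\sigma^{(i)}=\tilde\sigma^{(i)}\mathrm{E}$,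 let $\tau^{(i)}=\mathrm{rev}(\tilde\sigma^{(i)})\mathrm{E}$ (and $\tau^{(i)}$ empty if $\sigma^{(i)}$ is empty). Then $\phi_{\mathrm{LW}}(P)$ is the path with word $\tau^{(-1)}\tau^{(-2)}\cdots\tau^{(-n)}\tau^{(n)}\cdots\tau^{(2)}\tau^{(1)}\tau^{(0)}$. *)

theory Defs
  imports Main
begin

text \<open>Unit steps of a lattice path: north (N) and east (E).
  A lattice path from (0,0) is identified with its word of steps, so
  word(P) is P itself.\<close>

datatype step = N | E

definition lattice_path :: "nat \<Rightarrow> step list \<Rightarrow> bool" where
  "lattice_path n w \<longleftrightarrow> count_list w N = n \<and> count_list w E = n"

definition level :: "step list \<Rightarrow> nat \<Rightarrow> int" where
  "level w i = int (count_list (take i w) N) - int (count_list (take i w) E)"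

text \<open>Letters w_i (1-based) having level k, read from right to left.\<close>
definition sw_block :: "step list \<Rightarrow> int \<Rightarrow> step list" where
  "sw_block w k = [w ! (i - 1). i \<leftarrow> rev [1..<length w + 1], level w i = k]"

text \<open>Levels of letters lie in
  [-length w, length w], so it suffices to range over these values.\<close>
definition sw_minus :: "step list \<Rightarrow> step list" where
  "sw_minus w = concat (map (sw_block w)
      (map (\<lambda>j. - int j) [1..<length w + 1] @ rev (map int [0..<length w + 1])))"

text \<open>Position (0-based) in w of the (i+1)-st north step, i.e. the north step
  crossing the strip i \<le> y \<le> i+1.\<close>
definition north_pos :: "step list \<Rightarrow> nat \<Rightarrow> nat" where
  "north_pos w i = [j. j \<leftarrow> [0..<length w], w ! j = N] ! i"

text \<open>The number of complete unit squares in the strip i \<le> y \<le> i+1 to the right of P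
  and to the left of x = n is n - north_x w i.\<close>
definition north_x :: "step list \<Rightarrow> nat \<Rightarrow> nat" where
  "north_x w i = count_list (take (north_pos w i) w) E"

text \<open>Area vector g(P) = (g_0,...,g_{n-1}) with g_i + n - i = n - north_x w i.\<close>
definition area_vector :: "nat \<Rightarrow> step list \<Rightarrow> int list" where
  "area_vector n w = map (\<lambda>i. (int n - int (north_x w i)) - int n + int i) [0..<n]"

definition sigma_LW :: "nat \<Rightarrow> step list \<Rightarrow> int \<Rightarrow> step list" where
  "sigma_LW n w i = map (\<lambda>x. if x = i then E else N)
      (filter (\<lambda>x. x = i \<or> x = i - 1) (area_vector n w))"

definition tau_LW :: "nat \<Rightarrow> step list \<Rightarrow> int \<Rightarrow> step list" where
  "tau_LW n w i =
     (let s = sigma_LW n w i in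
      if 0 \<le> i then rev s
      else if s = [] then [] else rev (butlast s) @ [E])"

definition phi_LW :: "nat \<Rightarrow> step list \<Rightarrow> step list" where
  "phi_LW n w = concat (map (tau_LW n w)
      (map (\<lambda>j. - int j) [1..<n + 1] @ rev (map int [0..<n + 1])))"

end

theory Submission
  imports Defs
begin

lemma concat_map_if_single[simp]:
  "concat (map (\<lambda>x. if P x then [f x] else []) xs) = map f (filter P xs)"
  by (induction xs) auto

definition positions :: "step list \<Rightarrow> nat list" where
  "positions w = [j. j \<leftarrow> [0..<length w], w ! j = N]"

lemma upt0_Suc: "[0..<Suc L] = 0 # map Suc [0..<L]"
  by (simp add: upt_conv_Cons map_Suc_upt del: upt_Suc)

lemma positions_Nil[simp]: "positions [] = []"
  by (simp add: positions_def)

lemma positions_Cons: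
  "positions (x # w) = (if x = N then 0 # map Suc (positions w) else map Suc (positions w))"
  unfolding positions_def by (simp add: upt0_Suc filter_map comp_def del: upt_Suc)

lemma length_positions: "length (positions w) = count_list w N"
  by (induction w) (auto simp: positions_Cons)

lemma count_take_positions:
  "i < length (positions w) \<Longrightarrow> count_list (take (positions w ! i) w) N = i"
proof (induction w arbitrary: i)
  case Nil then show ?case by simp
next
  case (Cons x w)
  show ?case
  proof (cases x)
    case N
    then show ?thesis using Cons by (cases i) (auto simp: positions_Cons)
  next
    case E
    then show ?thesis using Cons by (auto simp: positions_Cons)
  qed
qed

lemma area_vector_positions:
  assumes "count_list w N = n"
  shows "area_vector n w = map (level w) (positions w)"
proof (rule nth_equalityI)
  show "length (area_vector n w) = length (map (level w) (positions w))"
    using assms by (simp add: area_vector_def length_positions)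
next
  fix i assume "i < length (area_vector n w)"
  then have i: "i < n" by (simp add: area_vector_def)
  then have il: "i < length (positions w)" using assms by (simp add: length_positions)
  have np: "north_pos w i = positions w ! i" by (simp add: north_pos_def positions_def)
  show "area_vector n w ! i = map (level w) (positions w) ! i"
    using i il count_take_positions[OF il]
    by (simp add: area_vector_def north_x_def np level_def)
qed

fun stp :: "int \<Rightarrow> step \<Rightarrow> int" where
  "stp a N = a + 1" | "stp a E = a - 1"

fun nl :: "int \<Rightarrow> step list \<Rightarrow> int list" where
  "nl a [] = []"
| "nl a (x # w) = (if x = N then a # nl (a + 1) w else nl (a - 1) w)"

fun lr :: "int \<Rightarrow> step list \<Rightarrow> int \<Rightarrow> step list" where
  "lr a [] k = []"
| "lr a (x # w) k = (if stp a x = k then [x] else []) @ lr (stp a x) w k"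

lemma level_Cons0[simp]: "level (x # w) 0 = 0"
  by (simp add: level_def)

lemma level_Cons_Suc[simp]:
  "level (x # w) (Suc j) = (if x = N then 1 else -1) + level w j"
  by (cases x) (simp_all add: level_def)

lemma nl_positions: "nl a w = map (\<lambda>j. a + level w j) (positions w)"
  by (induction w arbitrary: a) (auto simp: positions_Cons)

lemma upt1_Suc: "[Suc 0..<Suc (Suc L)] = Suc 0 # map Suc [Suc 0..<Suc L]"
  by (simp add: upt_conv_Cons map_Suc_upt del: upt_Suc)

lemma level_0[simp]: "level w 0 = 0"
  by (simp add: level_def)

lemma lr_levels:
  "lr a w k = map (\<lambda>i. w ! (i - Suc 0)) (filter (\<lambda>i. a + level w i = k) [Suc 0..<Suc (length w)])"
proof (induction w arbitrary: a)
  case Nil then show ?case by simp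
next
  case (Cons x w)
  define xs where "xs = [Suc 0..<Suc (length w)]"
  have u: "[Suc 0..<Suc (length (x # w))] = Suc 0 # map Suc xs"
    unfolding xs_def by (simp only: length_Cons upt1_Suc)
  have l1: "level (x # w) (Suc 0) = (if x = N then 1 else -1)"
    by (cases x) (simp_all add: level_def)
  have st: "stp a x = a + (if x = N then 1 else -1)" by (cases x) auto
  have f: "filter (\<lambda>i. a + level (x # w) i = k) (map Suc xs)
     = map Suc (filter (\<lambda>i. stp a x + level w i = k) xs)"
    by (simp add: filter_map comp_def st add.assoc)
  have m: "map (\<lambda>i. (x # w) ! (i - Suc 0)) (map Suc (filter (\<lambda>i. stp a x + level w i = k) xs))
     = map (\<lambda>i. w ! (i - Suc 0)) (filter (\<lambda>i. stp a x + level w i = k) xs)"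
  proof -
    have h: "\<And>i. i \<in> set xs \<Longrightarrow> (x # w) ! i = w ! (i - Suc 0)"
      unfolding xs_def by (auto simp: nth_Cons')
    show ?thesis unfolding map_map comp_def by (rule map_cong) (auto simp: xs_def nth_Cons')
  qed
  have IH: "lr (stp a x) w k = map (\<lambda>i. w ! (i - Suc 0)) (filter (\<lambda>i. stp a x + level w i = k) xs)"
    using Cons[of "stp a x"] unfolding xs_def .
  have p1: "(a + level (x # w) (Suc 0) = k) = (stp a x = k)" by (simp add: l1 st)
  have x0: "(x # w) ! (Suc 0 - Suc 0) = x" by simp
  show ?case
  proof (cases "stp a x = k")
    case True
    show ?thesis
      unfolding u filter.simps lr.simps p1 f IH if_P[OF True]
      by (simp only: list.map x0 m append_Cons append_Nil)
  next
    case False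
    show ?thesis
      unfolding u filter.simps lr.simps p1 f IH if_not_P[OF False]
      by (simp only: m append_Nil)
  qed
qed

lemma sw_block_lr: "sw_block w k = rev (lr 0 w k)"
  by (simp add: sw_block_def lr_levels rev_map rev_filter del: upt_Suc)

definition SS :: "int \<Rightarrow> step list \<Rightarrow> int \<Rightarrow> step list" where
  "SS a w k = map (\<lambda>x. if x = k then E else N) (filter (\<lambda>x. x = k \<or> x = k - 1) (nl a w))"

definition endl :: "int \<Rightarrow> step list \<Rightarrow> int" where
  "endl a w = a + int (count_list w N) - int (count_list w E)"

lemma invariant:
  "(if a > k then [E] else []) @ SS a w k = lr a w k @ (if endl a w > k then [E] else [])"
proof (induction w arbitrary: a)
  case Nil then show ?case by (simp add: SS_def endl_def)
next
  case (Cons x w)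
  show ?case
  proof (cases x)
    case N
    have e: "endl a (N # w) = endl (a + 1) w" by (simp add: endl_def)
    show ?thesis using Cons[of "a+1"] N
      by (auto simp: SS_def endl_def)
  next
    case E
    have e: "endl a (E # w) = endl (a - 1) w" by (simp add: endl_def)
    show ?thesis using Cons[of "a-1"] E
      by (auto simp: SS_def endl_def)
  qed
qed

lemma tau_sw:
  assumes "lattice_path n P"
  shows "tau_LW n P k = sw_block P k"
proof -
  have cn: "count_list P N = n" and ce: "count_list P E = n"
    using assms by (auto simp: lattice_path_def)
  have sig: "sigma_LW n P k = SS 0 P k"
    by (simp add: sigma_LW_def SS_def area_vector_positions[OF cn] nl_positions)
  have en: "endl 0 P = 0" by (simp add: endl_def cn ce)
  have inv: "(if 0 > k then [E] else []) @ SS 0 P k = lr 0 P k @ (if 0 > k then [E] else [])"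
    using invariant[of k 0 P] en by simp
  show ?thesis
  proof (cases "0 \<le> k")
    case True
    then show ?thesis using inv by (simp add: tau_LW_def sig sw_block_lr)
  next
    case False
    then have i2: "E # SS 0 P k = lr 0 P k @ [E]" using inv by simp
    show ?thesis
    proof (cases "SS 0 P k = []")
      case True
      then show ?thesis using i2 False by (simp add: tau_LW_def sig sw_block_lr)
    next
      case ne: False
      have "lr 0 P k = butlast (lr 0 P k @ [E])" by simp
      also have "\<dots> = E # butlast (SS 0 P k)" using i2[symmetric] ne by simp
      finally show ?thesis using False ne by (simp add: tau_LW_def sig sw_block_lr Let_def)
    qed
  qed
qed

lemma count_take_le: "count_list (take i w) x \<le> count_list w x"
proof -
  have "count_list w x = count_list (take i w) x + count_list (drop i w) x"
    by (metis append_take_drop_id count_list_append)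
  then show ?thesis by simp
qed

lemma sw_block_empty:
  assumes "lattice_path n P" and "k > int n \<or> k < - int n"
  shows "sw_block P k = []"
proof -
  have cn: "count_list P N = n" and ce: "count_list P E = n"
    using assms by (auto simp: lattice_path_def)
  have "\<forall>i. level P i \<noteq> k"
  proof
    fix i
    have "count_list (take i P) N \<le> n" "count_list (take i P) E \<le> n"
      using count_take_le[of i P N] count_take_le[of i P E] cn ce by auto
    then show "level P i \<noteq> k" using assms(2) by (auto simp: level_def)
  qed
  then show ?thesis by (simp add: sw_block_def)
qed

lemma length_count: "length w = count_list w N + count_list w E"
proof (induction w)
  case Nil then show ?case by simp
next
  case (Cons x w) then show ?case by (cases x) auto
qed

theorem mainTheorem4:
  fixes n :: nat and P :: "step list"
  assumes "n > 0" and "lattice_path n P"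
  shows "phi_LW n P = sw_minus P"
proof -
  have len: "length P = n + n"
    using assms(2) length_count[of P] unfolding lattice_path_def by simp
  have tau: "tau_LW n P = sw_block P"
    using tau_sw[OF assms(2)] by blast
  have e1: "[1..<n + n + 1] = [1..<n+1] @ [n+1..<n+n+1]"
    using upt_add_eq_append[of 1 "n+1" n] by (simp add: add_ac)
  have e2: "[0..<n + n + 1] = [0..<n+1] @ [n+1..<n+n+1]"
    using upt_add_eq_append[of 0 "n+1" n] by (simp add: add_ac)
  have z1: "concat (map (sw_block P) (map (\<lambda>j. - int j) [n+1..<n+n+1])) = []"
    using sw_block_empty[OF assms(2)] by auto
  have z2: "concat (map (sw_block P) (rev (map int [n+1..<n+n+1]))) = []"
    using sw_block_empty[OF assms(2)] by auto
  show ?thesis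
    unfolding phi_LW_def sw_minus_def len tau e1 e2
    using z1 z2 by (simp only: map_append rev_append concat_append append_Nil append_Nil2 append_assoc)
qed

end
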